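(* Let $\Omega=(0,1)\times(0,1)\subset\mathbb{R}^2$ and let $h:[0,1]\to\mathbb{R}$ be a bounded function with $h(0)=0$, $h(x_1)>0$ for $x_1\in(0,1]$, $h\in C^1(0,1]$, and suppose there exist constants $C>0$ and $\theta\in(0,1)$ such that $$\sup_{x\in\Omega,\ 0<r\le d}\frac{\int_{B(x,r)\cap\Omega}h(x_1)^{-1}\,dx}{|B(x,r)\cap\Omega|^{\theta}}\le C,$$ where $d$ is the diameter of $\Omega$. Then $\mathcal{H}_h^1(\Omega)$ is continuously embedded into $W^{1,1}(\Omega)$.
   Context: $B(x,r)$ is the Euclidean ball with center $x$ and radius $r$, $|\cdot|$ is Lebesgue measure. $\mathcal{H}_h^1(\Omega)=\{u\in L^2(\Omega)\mid \partial_{x_1}u\in L^2(\Omega),\ \sqrt{h(x_1)}\,\partial_{x_2}u\in L^2(\Omega)\}$ (distributional derivatives), with norm $\|u\|_{\mathcal{H}_h^1(\Omega)}=\big(\|u\|_{L^2(\Omega)}^2+\|\partial_{x_1}u\|_{L^2(\Omega)}^2+\|\sqrt{h(x_1)}\partial_{x_2}u\|_{L^2(\Omega)}^2\big)^{1/2}$. *)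

theory Defs
  imports "HOL-Analysis.Analysis"
begin

text \<open>The unit square, as a subset of real x real (Euclidean product metric, Lebesgue measure).\<close>
definition Omega :: "(real \<times> real) set" where
  "Omega = {0<..<1} \<times> {0<..<1}"

definition pd1 :: "(real \<times> real \<Rightarrow> real) \<Rightarrow> real \<times> real \<Rightarrow> real" where
  "pd1 f = (\<lambda>(x, y). deriv (\<lambda>t. f (t, y)) x)"

definition pd2 :: "(real \<times> real \<Rightarrow> real) \<Rightarrow> real \<times> real \<Rightarrow> real" where
  "pd2 f = (\<lambda>(x, y). deriv (\<lambda>t. f (x, t)) y)"

fun Ck :: "nat \<Rightarrow> (real \<times> real \<Rightarrow> real) set" where
  "Ck 0 = {f. continuous_on UNIV f}"
| "Ck (Suc k) = {f. (\<forall>z. f differentiable (at z)) \<and> pd1 f \<in> Ck k \<and> pd2 f \<in> Ck k}"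

definition smooth :: "(real \<times> real \<Rightarrow> real) \<Rightarrow> bool" where
  "smooth f \<longleftrightarrow> (\<forall>k. f \<in> Ck k)"

definition test_fun :: "(real \<times> real \<Rightarrow> real) \<Rightarrow> bool" where
  "test_fun \<phi> \<longleftrightarrow> smooth \<phi> \<and> compact (closure {z. \<phi> z \<noteq> 0})
      \<and> closure {z. \<phi> z \<noteq> 0} \<subseteq> Omega"

definition loc_integrable :: "(real \<times> real \<Rightarrow> real) \<Rightarrow> bool" where
  "loc_integrable g \<longleftrightarrow> (\<forall>K. compact K \<and> K \<subseteq> Omega \<longrightarrow> integrable (lebesgue_on K) g)"

definition weak_pd1 :: "(real \<times> real \<Rightarrow> real) \<Rightarrow> (real \<times> real \<Rightarrow> real) \<Rightarrow> bool" where
  "weak_pd1 u g \<longleftrightarrow> loc_integrable u \<and> loc_integrable g \<and>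
     (\<forall>\<phi>. test_fun \<phi> \<longrightarrow>
        (\<integral>z. u z * pd1 \<phi> z \<partial>lebesgue_on Omega) = - (\<integral>z. g z * \<phi> z \<partial>lebesgue_on Omega))"

definition weak_pd2 :: "(real \<times> real \<Rightarrow> real) \<Rightarrow> (real \<times> real \<Rightarrow> real) \<Rightarrow> bool" where
  "weak_pd2 u g \<longleftrightarrow> loc_integrable u \<and> loc_integrable g \<and>
     (\<forall>\<phi>. test_fun \<phi> \<longrightarrow>
        (\<integral>z. u z * pd2 \<phi> z \<partial>lebesgue_on Omega) = - (\<integral>z. g z * \<phi> z \<partial>lebesgue_on Omega))"

definition L2 :: "(real \<times> real \<Rightarrow> real) \<Rightarrow> bool" where
  "L2 f \<longleftrightarrow> f \<in> borel_measurable (lebesgue_on Omega) \<and> integrable (lebesgue_on Omega) (\<lambda>z. (f z)\<^sup>2)"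

definition L1 :: "(real \<times> real \<Rightarrow> real) \<Rightarrow> bool" where
  "L1 f \<longleftrightarrow> integrable (lebesgue_on Omega) f"

definition norm_L2 :: "(real \<times> real \<Rightarrow> real) \<Rightarrow> real" where
  "norm_L2 f = sqrt (\<integral>z. (f z)\<^sup>2 \<partial>lebesgue_on Omega)"

definition norm_L1 :: "(real \<times> real \<Rightarrow> real) \<Rightarrow> real" where
  "norm_L1 f = (\<integral>z. \<bar>f z\<bar> \<partial>lebesgue_on Omega)"

definition in_Hh :: "(real \<Rightarrow> real) \<Rightarrow> (real \<times> real \<Rightarrow> real) \<Rightarrow> (real \<times> real \<Rightarrow> real)
                      \<Rightarrow> (real \<times> real \<Rightarrow> real) \<Rightarrow> bool" where
  "in_Hh h u g1 g2 \<longleftrightarrow> L2 u \<and> weak_pd1 u g1 \<and> weak_pd2 u g2 \<and> L2 g1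
      \<and> L2 (\<lambda>z. sqrt (h (fst z)) * g2 z)"

definition norm_Hh :: "(real \<Rightarrow> real) \<Rightarrow> (real \<times> real \<Rightarrow> real) \<Rightarrow> (real \<times> real \<Rightarrow> real)
                      \<Rightarrow> (real \<times> real \<Rightarrow> real) \<Rightarrow> real" where
  "norm_Hh h u g1 g2 = sqrt ((norm_L2 u)\<^sup>2 + (norm_L2 g1)\<^sup>2 + (norm_L2 (\<lambda>z. sqrt (h (fst z)) * g2 z))\<^sup>2)"

definition in_W11 :: "(real \<times> real \<Rightarrow> real) \<Rightarrow> (real \<times> real \<Rightarrow> real)
                      \<Rightarrow> (real \<times> real \<Rightarrow> real) \<Rightarrow> bool" where
  "in_W11 u g1 g2 \<longleftrightarrow> L1 u \<and> weak_pd1 u g1 \<and> weak_pd2 u g2 \<and> L1 g1 \<and> L1 g2"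

definition norm_W11 :: "(real \<times> real \<Rightarrow> real) \<Rightarrow> (real \<times> real \<Rightarrow> real)
                      \<Rightarrow> (real \<times> real \<Rightarrow> real) \<Rightarrow> real" where
  "norm_W11 u g1 g2 = norm_L1 u + norm_L1 g1 + norm_L1 g2"

end

theory Submission
  imports Defs
begin

lemma CS_real:
  fixes f g :: "'a \<Rightarrow> real"
  assumes fm: "f \<in> borel_measurable M" and gm: "g \<in> borel_measurable M"
    and f0: "\<And>x. 0 \<le> f x" and g0: "\<And>x. 0 \<le> g x"
    and fi: "integrable M (\<lambda>x. (f x)\<^sup>2)" and gi: "integrable M (\<lambda>x. (g x)\<^sup>2)"
  shows "integrable M (\<lambda>x. f x * g x) \<and>
         (\<integral>x. f x * g x \<partial>M) \<le> sqrt (\<integral>x. (f x)\<^sup>2 \<partial>M) * sqrt (\<integral>x. (g x)\<^sup>2 \<partial>M)"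
proof -
  have cs: "(\<integral>\<^sup>+x. ennreal (f x) * ennreal (g x) \<partial>M)\<^sup>2 \<le> (\<integral>\<^sup>+x. ennreal (f x) ^ 2 \<partial>M) * (\<integral>\<^sup>+x. ennreal (g x) ^ 2 \<partial>M)"
    by (rule Cauchy_Schwarz_nn_integral) (use fm gm in auto)
  have e1: "(\<integral>\<^sup>+x. ennreal (f x) ^ 2 \<partial>M) = ennreal (\<integral>x. (f x)\<^sup>2 \<partial>M)"
    using nn_integral_eq_integral[OF fi] by (simp add: ennreal_power f0)
  have e2: "(\<integral>\<^sup>+x. ennreal (g x) ^ 2 \<partial>M) = ennreal (\<integral>x. (g x)\<^sup>2 \<partial>M)"
    using nn_integral_eq_integral[OF gi] by (simp add: ennreal_power g0)
  have e3: "(\<integral>\<^sup>+x. ennreal (f x) * ennreal (g x) \<partial>M) = (\<integral>\<^sup>+x. ennreal (f x * g x) \<partial>M)"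
    by (simp add: ennreal_mult f0 g0)
  have A0: "0 \<le> (\<integral>x. (f x)\<^sup>2 \<partial>M)" "0 \<le> (\<integral>x. (g x)\<^sup>2 \<partial>M)" by auto
  have cs2: "(\<integral>\<^sup>+x. ennreal (f x * g x) \<partial>M)\<^sup>2 \<le> ennreal ((\<integral>x. (f x)\<^sup>2 \<partial>M) * (\<integral>x. (g x)\<^sup>2 \<partial>M))"
    using cs e1 e2 e3 A0 by (simp add: ennreal_mult)
  hence "(\<integral>\<^sup>+x. ennreal (f x * g x) \<partial>M)\<^sup>2 < \<infinity>" by (simp add: le_less_trans)
  hence fin: "(\<integral>\<^sup>+x. ennreal (f x * g x) \<partial>M) < \<infinity>" by (simp add: power_less_top_ennreal)
  have int: "integrable M (\<lambda>x. f x * g x)"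
    apply (rule integrableI_bounded) using fm gm apply simp
    using fin f0 g0 by simp
  have "(\<integral>\<^sup>+x. ennreal (f x * g x) \<partial>M) = ennreal (\<integral>x. f x * g x \<partial>M)"
    using nn_integral_eq_integral[OF int] f0 g0 by simp
  with cs2 have "ennreal ((\<integral>x. f x * g x \<partial>M)^2) \<le> ennreal ((\<integral>x. (f x)\<^sup>2 \<partial>M) * (\<integral>x. (g x)\<^sup>2 \<partial>M))"
    by (simp add: ennreal_power f0 g0 integral_nonneg_AE)
  hence "(\<integral>x. f x * g x \<partial>M)^2 \<le> (\<integral>x. (f x)\<^sup>2 \<partial>M) * (\<integral>x. (g x)\<^sup>2 \<partial>M)"
    using A0 by (simp add: ennreal_le_iff)
  hence "(\<integral>x. f x * g x \<partial>M) \<le> sqrt ((\<integral>x. (f x)\<^sup>2 \<partial>M) * (\<integral>x. (g x)\<^sup>2 \<partial>M))"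
    by (simp add: real_le_rsqrt)
  thus ?thesis using int by (simp add: real_sqrt_mult)
qed


lemma Omega_facts: "open Omega" "Omega \<in> sets lebesgue" "bounded Omega" "Omega \<in> lmeasurable"
  "finite_measure (lebesgue_on Omega)"
proof -
  show o: "open Omega" unfolding Omega_def by (intro open_Times) auto
  show l: "Omega \<in> sets lebesgue" using o by (simp add: borel_open)
  have "Omega \<subseteq> cbox (0,0) (1,1)" unfolding Omega_def by (auto simp: cbox_Pair_eq)
  then show b: "bounded Omega" using bounded_cbox bounded_subset by blast
  show "Omega \<in> lmeasurable" using b l by (rule bounded_set_imp_lmeasurable)
  then show "finite_measure (lebesgue_on Omega)" by (rule finite_measure_lebesgue_on)
qed

lemma diam_ge1: "1 \<le> diameter Omega"
proof -
  have "dist ((1/10::real),(1/10::real)) (9/10,9/10) \<le> diameter Omega"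
    by (rule diameter_bounded_bound) (auto simp: Omega_facts(3), auto simp: Omega_def)
  moreover have "dist ((1/10::real),(1/10::real)) (9/10,9/10) = sqrt (128/100)"
    by (simp add: dist_Pair_Pair dist_real_def power2_eq_square)
  moreover have "1 \<le> sqrt (128/100::real)" by simp
  ultimately show ?thesis by linarith
qed

lemma Omega_ball: "Omega \<subseteq> ball (1/2,1/2) 1"
proof
  fix z assume "z \<in> Omega"
  then obtain a b where z: "z = (a,b)" "0<a" "a<1" "0<b" "b<1" unfolding Omega_def by auto
  have d: "dist (1/2) a < 1/2" "dist (1/2) b < 1/2" using z unfolding dist_real_def abs_less_iff by auto
  have "(dist (1/2) a)^2 < (1/2)^2" using d(1) by (intro power_strict_mono) auto
  moreover have "(dist (1/2) b)^2 < (1/2)^2" using d(2) by (intro power_strict_mono) auto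
  ultimately have "(dist (1/2) a)^2 + (dist (1/2) b)^2 < 1" by (simp add: power2_eq_square)
  hence "sqrt ((dist (1/2) a)^2 + (dist (1/2) b)^2) < 1" by (simp add: real_sqrt_less_iff) 
  then show "z \<in> ball (1/2,1/2) 1" using z by (simp add: dist_Pair_Pair)
qed


theorem lemma2p3:
  fixes h :: "real \<Rightarrow> real" and C \<theta> :: real
  assumes h_bdd: "bounded (h ` {0..1})"
    and h0: "h 0 = 0"
    and hpos: "\<forall>x\<in>{0<..1}. h x > 0"
    and hC1: "\<exists>h'. (\<forall>x\<in>{0<..1}. (h has_real_derivative h' x) (at x within {0<..1}))
                  \<and> continuous_on {0<..1} h'"
    and C_pos: "C > 0" and \<theta>: "0 < \<theta>" "\<theta> < 1"
    and cond: "\<forall>x\<in>Omega. \<forall>r. 0 < r \<and> r \<le> diameter Omega \<longrightarrow>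
        (\<integral>\<^sup>+ y \<in> ball x r \<inter> Omega. ennreal (1 / h (fst y)) \<partial>lebesgue)
          \<le> ennreal (C * (measure lebesgue (ball x r \<inter> Omega)) powr \<theta>)"
  shows "\<exists>K>0. \<forall>u g1 g2. in_Hh h u g1 g2 \<longrightarrow>
            in_W11 u g1 g2 \<and> norm_W11 u g1 g2 \<le> K * norm_Hh h u g1 g2"
proof -
  define H where "H = (\<lambda>z::real\<times>real. h (fst z))"
  define M where "M = lebesgue_on Omega"
  have spM: "space M = Omega" unfolding M_def by simp
  interpret fm: finite_measure M unfolding M_def by (rule Omega_facts)
  have hcont: "continuous_on {0<..1} h"
  proof -
    obtain h' where h': "\<forall>x\<in>{0<..1}. (h has_real_derivative h' x) (at x within {0<..1})"
      using hC1 by blast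
    show ?thesis unfolding continuous_on_eq_continuous_within
      using h' DERIV_continuous by blast
  qed
  have Hcont: "continuous_on Omega H" unfolding H_def
    by (rule continuous_on_compose2[OF hcont continuous_on_fst]) (auto simp: Omega_def)
  have Hm: "H \<in> borel_measurable M" unfolding M_def
    by (rule continuous_imp_measurable_on_sets_lebesgue[OF Hcont Omega_facts(2)])
  have Hpos: "\<And>z. z \<in> Omega \<Longrightarrow> H z > 0" unfolding H_def Omega_def using hpos by auto
  have c1: "(\<integral>\<^sup>+ y \<in> ball (1/2,1/2) 1 \<inter> Omega. ennreal (1 / h (fst y)) \<partial>lebesgue)
          \<le> ennreal (C * (measure lebesgue (ball (1/2,1/2) 1 \<inter> Omega)) powr \<theta>)"
    using cond diam_ge1 by (auto simp: Omega_def)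
  have bO: "ball (1/2,1/2) 1 \<inter> Omega = Omega" using Omega_ball by blast
  have nnfin: "(\<integral>\<^sup>+ y. ennreal (1 / H y) \<partial>M) < \<infinity>"
  proof -
    have "(\<integral>\<^sup>+ y. ennreal (1 / H y) \<partial>M) = (\<integral>\<^sup>+ y \<in> Omega. ennreal (1 / h (fst y)) \<partial>lebesgue)"
      unfolding M_def H_def by (rule nn_integral_restrict_space) (simp add: Omega_facts)
    also have "\<dots> \<le> ennreal (C * (measure lebesgue Omega) powr \<theta>)" using c1 bO by simp
    also have "\<dots> < \<infinity>" by simp
    finally show ?thesis .
  qed
  have invHm: "(\<lambda>z. 1 / H z) \<in> borel_measurable M" using Hm by simp
  have invHi: "integrable M (\<lambda>z. 1 / H z)"
  proof (rule integrableI_bounded[OF invHm])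
    have "(\<integral>\<^sup>+ y. ennreal (norm (1 / H y)) \<partial>M) = (\<integral>\<^sup>+ y. ennreal (1 / H y) \<partial>M)"
      by (rule nn_integral_cong) (use Hpos in \<open>fastforce simp: spM less_imp_le\<close>)
    then show "(\<integral>\<^sup>+ y. ennreal (norm (1 / H y)) \<partial>M) < \<infinity>" using nnfin by simp
  qed
  define B where "B = (\<integral>z. 1 / H z \<partial>M)"
  define m where "m = (\<integral>z. (1::real)\<^sup>2 \<partial>M)"
  define K where "K = 2 * sqrt m + sqrt B + 1"
  have B0: "0 \<le> B" unfolding B_def using Hpos by (intro integral_nonneg_AE AE_I2) (auto simp: spM less_imp_le)
  have m0: "0 \<le> m" unfolding m_def by simp
  have K0: "K > 0" unfolding K_def using B0 m0 by (smt (verit) real_sqrt_ge_zero)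
  show ?thesis
  proof (intro exI[of _ K] conjI allI impI K0)
    fix u g1 g2 assume Hh: "in_Hh h u g1 g2"
    have um: "u \<in> borel_measurable M" and ui: "integrable M (\<lambda>z. (u z)\<^sup>2)"
      and g1m: "g1 \<in> borel_measurable M" and g1i: "integrable M (\<lambda>z. (g1 z)\<^sup>2)"
      and wm: "(\<lambda>z. sqrt (H z) * g2 z) \<in> borel_measurable M"
      and wi: "integrable M (\<lambda>z. (sqrt (H z) * g2 z)\<^sup>2)"
      and wp1: "weak_pd1 u g1" and wp2: "weak_pd2 u g2"
      using Hh unfolding in_Hh_def L2_def M_def H_def by auto
    have g2m: "g2 \<in> borel_measurable M"
    proof -
      have "(\<lambda>z. (sqrt (H z) * g2 z) / sqrt (H z)) \<in> borel_measurable M"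
        using wm Hm by measurable
      moreover have "\<forall>z\<in>space M. (sqrt (H z) * g2 z) / sqrt (H z) = g2 z"
        using Hpos spM by (metis less_irrefl nonzero_mult_div_cancel_left real_sqrt_eq_zero_cancel_iff)
      ultimately show ?thesis using measurable_cong by (smt (verit))
    qed
    have one_m: "(\<lambda>z. 1::real) \<in> borel_measurable M" by simp
    have one_i: "integrable M (\<lambda>z. (1::real)\<^sup>2)" by simp
    have CSu: "integrable M (\<lambda>z. \<bar>u z\<bar> * 1) \<and> (\<integral>z. \<bar>u z\<bar> * 1 \<partial>M) \<le> sqrt (\<integral>z. \<bar>u z\<bar>\<^sup>2 \<partial>M) * sqrt m"
      unfolding m_def by (rule CS_real) (use um ui in auto)
    have CSg1: "integrable M (\<lambda>z. \<bar>g1 z\<bar> * 1) \<and> (\<integral>z. \<bar>g1 z\<bar> * 1 \<partial>M) \<le> sqrt (\<integral>z. \<bar>g1 z\<bar>\<^sup>2 \<partial>M) * sqrt m"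
      unfolding m_def by (rule CS_real) (use g1m g1i in auto)
    have invsm: "(\<lambda>z. \<bar>1 / sqrt (H z)\<bar>) \<in> borel_measurable M" using Hm by measurable
    have "integrable M (\<lambda>z. \<bar>1 / sqrt (H z)\<bar>\<^sup>2) \<longleftrightarrow> integrable M (\<lambda>z. 1 / H z)"
      using Hpos by (intro Bochner_Integration.integrable_cong[OF refl]) (auto simp: spM power_divide less_imp_le)
    hence invsi: "integrable M (\<lambda>z. \<bar>1 / sqrt (H z)\<bar>\<^sup>2)" using invHi by simp
    have CSg2: "integrable M (\<lambda>z. \<bar>sqrt (H z) * g2 z\<bar> * \<bar>1 / sqrt (H z)\<bar>) \<and>
       (\<integral>z. \<bar>sqrt (H z) * g2 z\<bar> * \<bar>1 / sqrt (H z)\<bar> \<partial>M)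
         \<le> sqrt (\<integral>z. \<bar>sqrt (H z) * g2 z\<bar>\<^sup>2 \<partial>M) * sqrt (\<integral>z. \<bar>1 / sqrt (H z)\<bar>\<^sup>2 \<partial>M)"
      by (rule CS_real) (use wm wi invsm invsi in auto)
    have eqB: "(\<integral>z. \<bar>1 / sqrt (H z)\<bar>\<^sup>2 \<partial>M) = B" unfolding B_def
      by (rule Bochner_Integration.integral_cong) (use Hpos in \<open>auto simp: spM power_divide less_imp_le\<close>)
    have eqg2: "\<forall>z\<in>space M. \<bar>sqrt (H z) * g2 z\<bar> * \<bar>1 / sqrt (H z)\<bar> = \<bar>g2 z\<bar>"
    proof
      fix z assume "z \<in> space M"
      then have "H z > 0" using Hpos spM by auto
      then show "\<bar>sqrt (H z) * g2 z\<bar> * \<bar>1 / sqrt (H z)\<bar> = \<bar>g2 z\<bar>" by (simp add: abs_mult)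
    qed
    have g2i: "integrable M (\<lambda>z. \<bar>g2 z\<bar>)"
    proof -
      have "integrable M (\<lambda>z. \<bar>sqrt (H z) * g2 z\<bar> * \<bar>1 / sqrt (H z)\<bar>) \<longleftrightarrow> integrable M (\<lambda>z. \<bar>g2 z\<bar>)"
        using eqg2 by (intro Bochner_Integration.integrable_cong[OF refl]) auto
      then show ?thesis using CSg2 by blast
    qed
    have g2i': "integrable M g2" using g2i g2m by (simp add: integrable_abs_iff)
    have g2b: "(\<integral>z. \<bar>g2 z\<bar> \<partial>M) \<le> sqrt (\<integral>z. (sqrt (H z) * g2 z)\<^sup>2 \<partial>M) * sqrt B"
    proof -
      have "(\<integral>z. \<bar>g2 z\<bar> \<partial>M) = (\<integral>z. \<bar>sqrt (H z) * g2 z\<bar> * \<bar>1 / sqrt (H z)\<bar> \<partial>M)"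
        by (rule Bochner_Integration.integral_cong) (use eqg2 in auto)
      then show ?thesis using CSg2 eqB by simp
    qed
    have ui': "integrable M u" using CSu um by (simp add: integrable_abs_iff)
    have g1i': "integrable M g1" using CSg1 g1m by (simp add: integrable_abs_iff)
    have W: "in_W11 u g1 g2" unfolding in_W11_def L1_def using ui' g1i' g2i' wp1 wp2 by (simp add: M_def)
    define a where "a = sqrt (\<integral>z. (u z)\<^sup>2 \<partial>M)"
    define b where "b = sqrt (\<integral>z. (g1 z)\<^sup>2 \<partial>M)"
    define c where "c = sqrt (\<integral>z. (sqrt (H z) * g2 z)\<^sup>2 \<partial>M)"
    have N: "norm_Hh h u g1 g2 = sqrt (a\<^sup>2 + b\<^sup>2 + c\<^sup>2)"
      unfolding norm_Hh_def norm_L2_def a_def b_def c_def M_def H_def by simp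
    have nW: "norm_W11 u g1 g2 \<le> a * sqrt m + b * sqrt m + c * sqrt B"
      using CSu CSg1 g2b unfolding norm_W11_def norm_L1_def a_def b_def c_def M_def by simp
    have abc: "0 \<le> a" "0 \<le> b" "0 \<le> c" unfolding a_def b_def c_def by simp_all
    have le: "a \<le> sqrt (a\<^sup>2 + b\<^sup>2 + c\<^sup>2)" "b \<le> sqrt (a\<^sup>2 + b\<^sup>2 + c\<^sup>2)" "c \<le> sqrt (a\<^sup>2 + b\<^sup>2 + c\<^sup>2)"
      using abc by (auto intro!: real_le_rsqrt)
    have "a * sqrt m + b * sqrt m + c * sqrt B \<le> K * sqrt (a\<^sup>2 + b\<^sup>2 + c\<^sup>2)"
    proof -
      have "a * sqrt m + b * sqrt m + c * sqrt B \<le> sqrt (a\<^sup>2 + b\<^sup>2 + c\<^sup>2) * (sqrt m + sqrt m + sqrt B)"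
      proof -
        have "a * sqrt m \<le> sqrt (a\<^sup>2 + b\<^sup>2 + c\<^sup>2) * sqrt m" using le(1) m0 by (intro mult_right_mono) auto
        moreover have "b * sqrt m \<le> sqrt (a\<^sup>2 + b\<^sup>2 + c\<^sup>2) * sqrt m" using le(2) m0 by (intro mult_right_mono) auto
        moreover have "c * sqrt B \<le> sqrt (a\<^sup>2 + b\<^sup>2 + c\<^sup>2) * sqrt B" using le(3) B0 by (intro mult_right_mono) auto
        ultimately show ?thesis by (simp add: distrib_left)
      qed
      also have "\<dots> \<le> sqrt (a\<^sup>2 + b\<^sup>2 + c\<^sup>2) * K"
        unfolding K_def by (intro mult_left_mono) auto
      finally show ?thesis by (simp add: mult.commute)
    qed
    then show "norm_W11 u g1 g2 \<le> K * norm_Hh h u g1 g2" using nW N by simp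
    show "in_W11 u g1 g2" by (rule W)
  qed
qed

end
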